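(* Let $A$ be any algebra (over a field of characteristic $0$) that is alternative and satisfies $(ab)c=(ba)c$ for all $a,b,c$. Then for all $a,b,c,d\in A$: \[ ((ab)c)d=((ac)b)d,\qquad d((ab)c)=((ab)d)c,\qquad d(c(ab))=((ac)d)b. \]
   Context: An algebra is alternative if $(x,x,y)=0=(x,y,y)$ for all $x,y$, where $(x,y,z)=(xy)z-x(yz)$. This variety is the Koszul dual of the variety of left-symmetric algebras satisfying $a(bc)+b(ac)+a(cb)+c(ab)+b(ca)+c(ba)=0$. *)

theory Defs
  imports Complex_Main
begin

definition nonassoc_algebra ::
  "('k::field \<Rightarrow> 'a::ab_group_add \<Rightarrow> 'a) \<Rightarrow> ('a \<Rightarrow> 'a \<Rightarrow> 'a) \<Rightarrow> bool" where
  "nonassoc_algebra smul mult \<longleftrightarrow>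
     vector_space smul \<and>
     (\<forall>x y z. mult (x + y) z = mult x z + mult y z) \<and>
     (\<forall>x y z. mult x (y + z) = mult x y + mult x z) \<and>
     (\<forall>c x y. mult (smul c x) y = smul c (mult x y)) \<and>
     (\<forall>c x y. mult x (smul c y) = smul c (mult x y))"

definition associator :: "('a \<Rightarrow> 'a \<Rightarrow> 'a) \<Rightarrow> 'a \<Rightarrow> 'a \<Rightarrow> 'a \<Rightarrow> 'a::ab_group_add" where
  "associator mult x y z = mult (mult x y) z - mult x (mult y z)"

definition alternative :: "('a::ab_group_add \<Rightarrow> 'a \<Rightarrow> 'a) \<Rightarrow> bool" where
  "alternative mult \<longleftrightarrow>
     (\<forall>x y. associator mult x x y = 0) \<and>
     (\<forall>x y. associator mult x y y = 0)"

end

theory Submission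
  imports Defs
begin

locale altC =
  fixes smul :: "'k::field_char_0 \<Rightarrow> 'a::ab_group_add \<Rightarrow> 'a"
    and mult :: "'a \<Rightarrow> 'a \<Rightarrow> 'a"
  assumes NA: "nonassoc_algebra smul mult"
    and ALT: "alternative mult"
    and CC: "\<forall>a b c. mult (mult a b) c = mult (mult b a) c"
begin

lemma vs: "vector_space smul" using NA unfolding nonassoc_algebra_def by blast

lemma addL: "mult (x + y) z = mult x z + mult y z" using NA unfolding nonassoc_algebra_def by blast
lemma addR: "mult x (y + z) = mult x y + mult x z" using NA unfolding nonassoc_algebra_def by blast

lemma zeroR: "mult x 0 = 0"
proof -
  have "mult x (0 + 0) = mult x 0 + mult x 0" by (rule addR)
  then show ?thesis by simp
qed
lemma zeroL: "mult 0 x = 0"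
proof -
  have "mult (0 + 0) x = mult 0 x + mult 0 x" by (rule addL)
  then show ?thesis by simp
qed
lemma diffR: "mult x (y - z) = mult x y - mult x z"
proof -
  have "mult x (y - z + z) = mult x (y - z) + mult x z" by (rule addR)
  then show ?thesis by (simp add: algebra_simps)
qed
lemma diffL: "mult (y - z) x = mult y x - mult z x"
proof -
  have "mult (y - z + z) x = mult (y - z) x + mult z x" by (rule addL)
  then show ?thesis by (simp add: algebra_simps)
qed

lemma sc0: "smul c 0 = 0"
proof -
  have "smul c (0 + 0) = smul c 0 + smul c 0" using vs unfolding vector_space_def by blast
  then show ?thesis by simp
qed

lemma tors2: "(x::'a) + x = 0 \<Longrightarrow> x = 0"
proof -
  assume h: "x + x = 0"
  have "smul (1/2) (x + x) = smul (1/2) x + smul (1/2) x" using vs unfolding vector_space_def by blast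
  also have "\<dots> = smul (1/2 + 1/2) x" using vs unfolding vector_space_def by metis
  also have "\<dots> = x" using vs unfolding vector_space_def by simp
  finally show ?thesis using h sc0 by simp
qed

lemma tors3: "(x::'a) + x + x = 0 \<Longrightarrow> x = 0"
proof -
  assume h: "x + x + x = 0"
  have "smul (1/3) (x + x + x) = smul (1/3) x + smul (1/3) x + smul (1/3) x" using vs unfolding vector_space_def by metis
  also have "\<dots> = smul (1/3 + 1/3 + 1/3) x" using vs unfolding vector_space_def by metis
  also have "\<dots> = x" using vs unfolding vector_space_def by simp
  finally show ?thesis using h sc0 by simp
qed

lemma assoc_x: "mult (mult x x) y - mult x (mult x y) = 0"
  using ALT unfolding alternative_def associator_def by blast
lemma assoc_y: "mult (mult x y) y - mult x (mult y y) = 0"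
  using ALT unfolding alternative_def associator_def by blast

lemma gL1: "(mult (mult x y) z - mult x (mult y z) + (mult (mult y x) z - mult y (mult x z))) = 0"
proof -
  have h: "mult (mult (x+y) (x+y)) z - mult (x+y) (mult (x+y) z) = 0" by (rule assoc_x)
  have hx: "mult (mult x x) z - mult x (mult x z) = 0" by (rule assoc_x)
  have hy: "mult (mult y y) z - mult y (mult y z) = 0" by (rule assoc_x)
  from h have "(mult (mult x x) z - mult x (mult x z)) + (mult (mult y y) z - mult y (mult y z))
     + (mult (mult x y) z - mult x (mult y z) + (mult (mult y x) z - mult y (mult x z))) = 0"
    by (simp add: addL addR algebra_simps)
  with hx hy show ?thesis by simp
qed

lemma gL2: "(mult (mult x y) z - mult x (mult y z) + (mult (mult x z) y - mult x (mult z y))) = 0"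
proof -
  have h: "mult (mult x (y+z)) (y+z) - mult x (mult (y+z) (y+z)) = 0" by (rule assoc_y)
  have hy: "mult (mult x y) y - mult x (mult y y) = 0" by (rule assoc_y)
  have hz: "mult (mult x z) z - mult x (mult z z) = 0" by (rule assoc_y)
  from h have "(mult (mult x y) y - mult x (mult y y)) + (mult (mult x z) z - mult x (mult z z))
     + (mult (mult x y) z - mult x (mult y z) + (mult (mult x z) y - mult x (mult z y))) = 0"
    by (simp add: addL addR algebra_simps)
  with hy hz show ?thesis by simp
qed

lemma gC: "(mult (mult x y) z - mult (mult y x) z) = 0"
  using CC by simp

lemma gL1L: "(mult w (mult (mult x y) z) - mult w (mult x (mult y z)) + (mult w (mult (mult y x) z) - mult w (mult y (mult x z)))) = 0"
proof -
  have "mult w (mult (mult x y) z - mult x (mult y z) + (mult (mult y x) z - mult y (mult x z))) = 0"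
    using gL1 zeroR by simp
  then show ?thesis by (simp only: addR diffR)
qed
lemma gL2L: "(mult w (mult (mult x y) z) - mult w (mult x (mult y z)) + (mult w (mult (mult x z) y) - mult w (mult x (mult z y)))) = 0"
proof -
  have "mult w (mult (mult x y) z - mult x (mult y z) + (mult (mult x z) y - mult x (mult z y))) = 0"
    using gL2 zeroR by simp
  then show ?thesis by (simp only: addR diffR)
qed
lemma gCL: "(mult w (mult (mult x y) z) - mult w (mult (mult y x) z)) = 0"
  using CC by simp
lemma gL1R: "(mult (mult (mult x y) z) w - mult (mult x (mult y z)) w + (mult (mult (mult y x) z) w - mult (mult y (mult x z)) w)) = 0"
proof -
  have "mult (mult (mult x y) z - mult x (mult y z) + (mult (mult y x) z - mult y (mult x z))) w = 0"
    using gL1 zeroL by simp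
  then show ?thesis by (simp only: addL diffL)
qed
lemma gL2R: "(mult (mult (mult x y) z) w - mult (mult x (mult y z)) w + (mult (mult (mult x z) y) w - mult (mult x (mult z y)) w)) = 0"
proof -
  have "mult (mult (mult x y) z - mult x (mult y z) + (mult (mult x z) y - mult x (mult z y))) w = 0"
    using gL2 zeroL by simp
  then show ?thesis by (simp only: addL diffL)
qed
lemma gCR: "(mult (mult (mult x y) z) w - mult (mult (mult y x) z) w) = 0"
  using CC by simp

lemma g1: "((mult (mult (mult a b) c) d) - (mult (mult (mult a c) b) d)) = 0"
proof -
  have key: "((mult (mult (mult a b) c) d) - (mult (mult (mult a c) b) d)) + ((mult (mult (mult a b) c) d) - (mult (mult (mult a c) b) d)) + ((mult (mult (mult a b) c) d) - (mult (mult (mult a c) b) d)) = 0 + ((mult (mult (mult a b) c) d) - (mult (mult a (mult b c)) d) + ((mult (mult (mult b a) c) d) - (mult (mult b (mult a c)) d))) + ((mult (mult (mult a b) c) d) - (mult (mult a (mult b c)) d) + ((mult (mult (mult b a) c) d) - (mult (mult b (mult a c)) d))) - ((mult (mult (mult a b) c) d) - (mult (mult a (mult b c)) d) + ((mult (mult (mult a c) b) d) - (mult (mult a (mult c b)) d))) + ((mult (mult (mult a b) c) d) - (mult (mult (mult b a) c) d)) + ((mult (mult (mult a b) c) d) - (mult (mult (mult b a) c) d)) - ((mult (mult (mult b c) a) d) - (mult (mult a (mult b c)) d)) + ((mult (mult (mult c b) a) d) - (mult (mult a (mult c b)) d)) + ((mult (mult (mult b c) a) d) - (mult (mult (mult c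 b) a) d)) - ((mult (mult (mult a c) b) d) - (mult (mult b (mult a c)) d)) - ((mult (mult (mult a c) b) d) - (mult (mult b (mult a c)) d))"
    by (simp add: algebra_simps)
  also have "\<dots> = 0"
    by (simp only: gL1R[where w=d and x=a and y=b and z=c] gL2R[where w=d and x=a and y=b and z=c] gCR[where w=d and x=a and y=b and z=c] gC[where x="mult b c" and y=a and z=d] gC[where x="mult c b" and y=a and z=d] gCR[where w=d and x=b and y=c and z=a] gC[where x="mult a c" and y=b and z=d]) simp
  finally show ?thesis by (rule tors3)
qed

lemma g2: "((mult d (mult (mult a b) c)) - (mult (mult (mult a b) d) c)) = 0"
proof -
  have key: "((mult d (mult (mult a b) c)) - (mult (mult (mult a b) d) c)) + ((mult d (mult (mult a b) c)) - (mult (mult (mult a b) d) c)) = 0 + ((mult (mult (mult a b) c) d) - (mult (mult (mult a c) b) d)) - ((mult (mult (mult a b) d) c) - (mult (mult (mult a d) b) c)) - ((mult (mult (mult a b) d) c) - (mult (mult (mult a d) b) c)) - ((mult (mult (mult b a) c) d) - (mult (mult (mult b c) a) d)) - ((mult (mult (mult b a) c) d) - (mult (mult (mult b c) a) d)) - ((mult (mult (mult b a) c) d) - (mult (mult (mult b c) a) d)) - ((mult (mult (mult b a) c) d) - (mult (mult (mult b c) a) d)) + ((mult (mult (mult b a) d) c) - (mult (mult (mult b d) a) c)) + ((mult (mult (mult b a) d) c) - (mult (mult (mult b d) a) c)) + ((mult (mult (mult b a) d) c) - (mult (mult (mult b d) a) c)) + ((mult (mult (mult b a) d) c) - (mult (mult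 (mult b d) a) c)) + ((mult (mult (mult c a) b) d) - (mult (mult (mult c b) a) d)) - ((mult (mult (mult c a) d) b) - (mult (mult (mult c d) a) b)) - ((mult (mult (mult c a) d) b) - (mult (mult (mult c d) a) b)) - ((mult (mult (mult c b) d) a) - (mult (mult (mult c d) b) a)) - ((mult (mult (mult c b) d) a) - (mult (mult (mult c d) b) a)) - ((mult (mult (mult c d) a) b) - (mult (mult a (mult c d)) b)) - ((mult (mult (mult c d) a) b) - (mult (mult a (mult c d)) b)) + ((mult d (mult (mult a b) c)) - (mult d (mult a (mult b c))) + ((mult d (mult (mult b a) c)) - (mult d (mult b (mult a c))))) + ((mult (mult (mult a b) c) d) - (mult (mult a (mult b c)) d) + ((mult (mult (mult b a) c) d) - (mult (mult b (mult a c)) d))) + ((mult (mult (mult a b) c) d) - (mult (mult a (mult b c)) d) + ((mult (mult (mult a c) b) d) - (mult (mult a (mult c b)) d))) + ((mult d (mult (mult a b) c)) - (mult d (mult (mult b a) c))) - ((mult (mult (mult a b) c) d) - (mult (mult (mult b a) c) d)) - ((mult (mult (mult a b) c) d) - (mult (mult (mult b a) c) d)) - ((mult (mult (mult a b) c) d) - (mult (mult (mult b a) c) d)) - ((mult c (mult (mult a b) d)) - (mult c (mult a (mult b d))) + ((mult c (mult (mult b a) d)) - (mult c (mult b (mult a d))))) - ((mult c (mult (mult a b) d)) - (mult c (mult a (mult b d))) + ((mult c (mult (mult b a) d)) - (mult c (mult b (mult a d))))) - ((mult (mult (mult a b) d) c) - (mult (mult a (mult b d)) c) + ((mult (mult (mult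 b a) d) c) - (mult (mult b (mult a d)) c))) - ((mult (mult (mult a b) d) c) - (mult (mult a (mult b d)) c) + ((mult (mult (mult b a) d) c) - (mult (mult b (mult a d)) c))) - ((mult (mult (mult a b) d) c) - (mult (mult a (mult b d)) c) + ((mult (mult (mult b a) d) c) - (mult (mult b (mult a d)) c))) + ((mult c (mult (mult a b) d)) - (mult c (mult a (mult b d))) + ((mult c (mult (mult a d) b)) - (mult c (mult a (mult d b))))) + ((mult c (mult (mult a b) d)) - (mult c (mult a (mult b d))) + ((mult c (mult (mult a d) b)) - (mult c (mult a (mult d b))))) + ((mult (mult (mult a b) d) c) - (mult (mult (mult b a) d) c)) + ((mult (mult (mult a b) d) c) - (mult (mult (mult b a) d) c)) + ((mult (mult (mult a b) d) c) - (mult (mult (mult b a) d) c)) + ((mult (mult (mult b d) a) c) - (mult (mult b d) (mult a c)) + ((mult (mult a (mult b d)) c) - (mult a (mult (mult b d) c)))) - ((mult (mult (mult b d) a) c) - (mult (mult b d) (mult a c)) + ((mult (mult (mult b d) c) a) - (mult (mult b d) (mult c a)))) - ((mult (mult (mult b d) a) c) - (mult (mult b d) (mult a c)) + ((mult (mult (mult b d) c) a) - (mult (mult b d) (mult c a)))) + ((mult (mult (mult b d) a) c) - (mult (mult a (mult b d)) c)) + ((mult (mult (mult b d) a) c) - (mult (mult a (mult b d)) c)) + ((mult (mult (mult b d) a) c) - (mult (mult a (mult b d)) c)) - ((mult (mult a (mult b d)) c) - (mult a (mult (mult b d) c)) + ((mult (mult a c) (mult b d)) - (mult a (mult c (mult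 b d))))) + ((mult (mult (mult a c) b) d) - (mult (mult (mult c a) b) d)) - ((mult (mult (mult d b) a) c) - (mult (mult d b) (mult a c)) + ((mult (mult a (mult d b)) c) - (mult a (mult (mult d b) c)))) + ((mult (mult (mult d b) a) c) - (mult (mult a (mult d b)) c)) + ((mult (mult a (mult d b)) c) - (mult a (mult (mult d b) c)) + ((mult (mult a c) (mult d b)) - (mult a (mult c (mult d b))))) + ((mult (mult a (mult d b)) c) - (mult a (mult (mult d b) c)) + ((mult (mult a c) (mult d b)) - (mult a (mult c (mult d b))))) - ((mult (mult a c) (mult d b)) - (mult a (mult c (mult d b))) + ((mult (mult c a) (mult d b)) - (mult c (mult a (mult d b))))) - ((mult (mult a c) (mult d b)) - (mult a (mult c (mult d b))) + ((mult (mult c a) (mult d b)) - (mult c (mult a (mult d b))))) - ((mult (mult a c) (mult d b)) - (mult (mult c a) (mult d b))) - ((mult (mult a c) (mult d b)) - (mult (mult c a) (mult d b))) + ((mult b (mult (mult a c) d)) - (mult b (mult a (mult c d))) + ((mult b (mult (mult c a) d)) - (mult b (mult c (mult a d))))) + ((mult (mult (mult a c) d) b) - (mult (mult a (mult c d)) b) + ((mult (mult (mult c a) d) b) - (mult (mult c (mult a d)) b))) + ((mult (mult (mult a c) d) b) - (mult (mult a (mult c d)) b) + ((mult (mult (mult c a) d) b) - (mult (mult c (mult a d)) b))) - ((mult b (mult (mult a c) d)) - (mult b (mult a (mult c d))) + ((mult b (mult (mult a d) c)) - (mult b (mult a (mult d c))))) + ((mult b (mult (mult a c) d)) - (mult b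 (mult (mult c a) d))) - ((mult (mult (mult b c) a) d) - (mult (mult b c) (mult a d)) + ((mult (mult (mult b c) d) a) - (mult (mult b c) (mult d a)))) - ((mult (mult (mult b c) a) d) - (mult (mult b c) (mult a d)) + ((mult (mult (mult b c) d) a) - (mult (mult b c) (mult d a)))) - ((mult (mult (mult b c) a) d) - (mult (mult a (mult b c)) d)) - ((mult (mult (mult b c) a) d) - (mult (mult a (mult b c)) d)) - ((mult (mult a d) (mult b c)) - (mult a (mult d (mult b c))) + ((mult (mult d a) (mult b c)) - (mult d (mult a (mult b c))))) - ((mult (mult a d) (mult b c)) - (mult (mult d a) (mult b c))) + ((mult (mult (mult c b) a) d) - (mult (mult c b) (mult a d)) + ((mult (mult a (mult c b)) d) - (mult a (mult (mult c b) d)))) + ((mult b (mult (mult a d) c)) - (mult b (mult a (mult d c))) + ((mult b (mult (mult d a) c)) - (mult b (mult d (mult a c))))) - ((mult b (mult (mult a d) c)) - (mult b (mult (mult d a) c))) - ((mult (mult (mult c d) b) a) - (mult (mult b (mult c d)) a)) - ((mult (mult (mult c d) b) a) - (mult (mult b (mult c d)) a)) + ((mult c (mult (mult b a) d)) - (mult c (mult b (mult a d))) + ((mult c (mult (mult b d) a)) - (mult c (mult b (mult d a))))) + ((mult c (mult (mult b a) d)) - (mult c (mult b (mult a d))) + ((mult c (mult (mult b d) a)) - (mult c (mult b (mult d a))))) + ((mult (mult (mult b a) d) c) - (mult (mult b (mult a d)) c) + ((mult (mult (mult b d) a) c) - (mult (mult b (mult d a)) c))) + ((mult (mult (mult b a)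 d) c) - (mult (mult b (mult a d)) c) + ((mult (mult (mult b d) a) c) - (mult (mult b (mult d a)) c))) - ((mult (mult (mult a d) b) c) - (mult (mult a d) (mult b c)) + ((mult (mult (mult a d) c) b) - (mult (mult a d) (mult c b)))) - ((mult (mult (mult a d) b) c) - (mult (mult a d) (mult b c)) + ((mult (mult (mult a d) c) b) - (mult (mult a d) (mult c b)))) - ((mult (mult b (mult a d)) c) - (mult b (mult (mult a d) c)) + ((mult (mult b c) (mult a d)) - (mult b (mult c (mult a d))))) - ((mult (mult b c) (mult a d)) - (mult (mult c b) (mult a d))) + ((mult (mult b (mult d a)) c) - (mult b (mult (mult d a) c)) + ((mult (mult b c) (mult d a)) - (mult b (mult c (mult d a))))) + ((mult (mult b (mult d a)) c) - (mult b (mult (mult d a) c)) + ((mult (mult b c) (mult d a)) - (mult b (mult c (mult d a))))) - ((mult (mult b c) (mult d a)) - (mult b (mult c (mult d a))) + ((mult (mult c b) (mult d a)) - (mult c (mult b (mult d a))))) - ((mult (mult b c) (mult d a)) - (mult b (mult c (mult d a))) + ((mult (mult c b) (mult d a)) - (mult c (mult b (mult d a))))) - ((mult (mult b c) (mult d a)) - (mult (mult c b) (mult d a))) - ((mult (mult b c) (mult d a)) - (mult (mult c b) (mult d a))) + ((mult a (mult (mult b c) d)) - (mult a (mult b (mult c d))) + ((mult a (mult (mult c b) d)) - (mult a (mult c (mult b d))))) + ((mult (mult (mult b c) d) a) - (mult (mult b (mult c d)) a) + ((mult (mult (mult c b) d) a) - (mult (mult c (mult b d)) a))) + ((mult (mult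 (mult b c) d) a) - (mult (mult b (mult c d)) a) + ((mult (mult (mult c b) d) a) - (mult (mult c (mult b d)) a))) - ((mult a (mult (mult b c) d)) - (mult a (mult b (mult c d))) + ((mult a (mult (mult b d) c)) - (mult a (mult b (mult d c))))) + ((mult (mult (mult a c) b) d) - (mult (mult a c) (mult b d)) + ((mult (mult b (mult a c)) d) - (mult b (mult (mult a c) d)))) - ((mult (mult (mult a c) b) d) - (mult (mult a c) (mult b d)) + ((mult (mult (mult a c) d) b) - (mult (mult a c) (mult d b)))) - ((mult (mult (mult a c) b) d) - (mult (mult a c) (mult b d)) + ((mult (mult (mult a c) d) b) - (mult (mult a c) (mult d b)))) - ((mult (mult b d) (mult a c)) - (mult b (mult d (mult a c))) + ((mult (mult d b) (mult a c)) - (mult d (mult b (mult a c))))) + ((mult a (mult (mult b d) c)) - (mult a (mult b (mult d c))) + ((mult a (mult (mult d b) c)) - (mult a (mult d (mult b c))))) + ((mult (mult (mult b d) c) a) - (mult (mult b d) (mult c a)) + ((mult (mult c (mult b d)) a) - (mult c (mult (mult b d) a)))) + ((mult (mult (mult b d) c) a) - (mult (mult b d) (mult c a)) + ((mult (mult c (mult b d)) a) - (mult c (mult (mult b d) a)))) + ((mult (mult (mult a d) c) b) - (mult (mult a d) (mult c b)) + ((mult (mult c (mult a d)) b) - (mult c (mult (mult a d) b)))) + ((mult (mult (mult a d) c) b) - (mult (mult a d) (mult c b)) + ((mult (mult c (mult a d)) b) - (mult c (mult (mult a d) b))))"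
    by (simp add: algebra_simps)
  also have "\<dots> = 0"
    by (simp only: g1[where a=a and b=b and c=c and d=d] g1[where a=a and b=b and c=d and d=c] g1[where a=b and b=a and c=c and d=d] g1[where a=b and b=a and c=d and d=c] g1[where a=c and b=a and c=b and d=d] g1[where a=c and b=a and c=d and d=b] g1[where a=c and b=b and c=d and d=a] gC[where x="mult c d" and y=a and z=b] gL1L[where w=d and x=a and y=b and z=c] gL1R[where w=d and x=a and y=b and z=c] gL2R[where w=d and x=a and y=b and z=c] gCL[where w=d and x=a and y=b and z=c] gCR[where w=d and x=a and y=b and z=c] gL1L[where w=c and x=a and y=b and z=d] gL1R[where w=c and x=a and y=b and z=d] gL2L[where w=c and x=a and y=b and z=d] gCR[where w=c and x=a and y=b and z=d] gL1[where x="mult b d" and y=a and z=c] gL2[where x="mult b d" and y=a and z=c] gC[where x="mult b d" and y=a and z=c] gL2[where x=a and y="mult b d" and z=c] gCR[where w=d and x=a and y=c and z=b] gL1[where x="mult d b" and y=a and z=c] gC[where x="mult d b" and y=a and z=c] gL2[where x=a and y="mult d b" and z=c] gL1[where x=a and y=c and z="mult d b"] gC[where x=a and y=c and z="mult d b"] gL1L[where w=b and x=a and y=c and z=d] gL1R[where w=b and x=a and y=c and z=d] gL2L[where w=b and x=a and y=c and z=d] gCL[where w=b and x=a and y=c and z=d] gL2[where x="mult b c" and y=a and z=d] gC[where x="mult b c" and y=a and z=d] gL1[where x=a and y=d and z="mult b c"] gC[where x=a and y=d and z="mult b c"] gL1[where x="mult c b" and y=a and z=d] gL1L[where w=b and x=a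 and y=d and z=c] gCL[where w=b and x=a and y=d and z=c] gC[where x="mult c d" and y=b and z=a] gL2L[where w=c and x=b and y=a and z=d] gL2R[where w=c and x=b and y=a and z=d] gL2[where x="mult a d" and y=b and z=c] gL2[where x=b and y="mult a d" and z=c] gC[where x=b and y=c and z="mult a d"] gL2[where x=b and y="mult d a" and z=c] gL1[where x=b and y=c and z="mult d a"] gC[where x=b and y=c and z="mult d a"] gL1L[where w=a and x=b and y=c and z=d] gL1R[where w=a and x=b and y=c and z=d] gL2L[where w=a and x=b and y=c and z=d] gL1[where x="mult a c" and y=b and z=d] gL2[where x="mult a c" and y=b and z=d] gL1[where x=b and y=d and z="mult a c"] gL1L[where w=a and x=b and y=d and z=c] gL1[where x="mult b d" and y=c and z=a] gL1[where x="mult a d" and y=c and z=b]) simp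
  finally show ?thesis by (rule tors2)
qed

lemma g3: "((mult d (mult c (mult a b))) - (mult (mult (mult a c) d) b)) = 0"
proof -
  have key: "((mult d (mult c (mult a b))) - (mult (mult (mult a c) d) b)) = 0 + ((mult (mult (mult b a) d) c) - (mult (mult (mult b d) a) c)) - ((mult d (mult (mult a b) c)) - (mult (mult (mult a b) d) c)) + ((mult d (mult (mult a c) b)) - (mult (mult (mult a c) d) b)) - ((mult b (mult (mult a d) c)) - (mult (mult (mult a d) b) c)) + ((mult a (mult (mult b c) d)) - (mult (mult (mult b c) a) d)) + ((mult d (mult (mult a b) c)) - (mult d (mult a (mult b c))) + ((mult d (mult (mult a c) b)) - (mult d (mult a (mult c b))))) - ((mult (mult (mult a b) d) c) - (mult (mult a (mult b d)) c) + ((mult (mult (mult b a) d) c) - (mult (mult b (mult a d)) c))) + ((mult (mult (mult b d) a) c) - (mult (mult a (mult b d)) c)) - ((mult d (mult (mult a c) b)) - (mult d (mult a (mult c b))) + ((mult d (mult (mult c a) b)) - (mult d (mult c (mult a b))))) - ((mult d (mult (mult a c) b)) - (mult d (mult (mult c a) b))) + ((mult (mult (mult b c) a) d) - (mult (mult a (mult b c)) d)) + ((mult (mult a (mult b c)) d) - (mult a (mult (mult b c) d)) + ((mult (mult a d) (mult b c)) - (mult a (mult d (mult b c))))) - ((mult (mult a d) (mult b c)) - (mult a (mult d (mult b c))) + ((mult (mult d a) (mult b c)) - (mult d (mult a (mult b c))))) - ((mult (mult a d) (mult b c)) - (mult (mult d a) (mult b c))) - ((mult (mult (mult a d) b) c)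 - (mult (mult a d) (mult b c)) + ((mult (mult b (mult a d)) c) - (mult b (mult (mult a d) c))))"
    by (simp add: algebra_simps)
  also have "\<dots> = 0"
    by (simp only: g1[where a=b and b=a and c=d and d=c] g2[where a=a and b=b and c=c and d=d] g2[where a=a and b=c and c=b and d=d] g2[where a=a and b=d and c=c and d=b] g2[where a=b and b=c and c=d and d=a] gL2L[where w=d and x=a and y=b and z=c] gL1R[where w=c and x=a and y=b and z=d] gC[where x="mult b d" and y=a and z=c] gL1L[where w=d and x=a and y=c and z=b] gCL[where w=d and x=a and y=c and z=b] gC[where x="mult b c" and y=a and z=d] gL2[where x=a and y="mult b c" and z=d] gL1[where x=a and y=d and z="mult b c"] gC[where x=a and y=d and z="mult b c"] gL1[where x="mult a d" and y=b and z=c]) simp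
  finally show ?thesis .
qed

end

theorem mainTheorem18:
  fixes smul :: "'k::field_char_0 \<Rightarrow> 'a::ab_group_add \<Rightarrow> 'a"
    and mult :: "'a \<Rightarrow> 'a \<Rightarrow> 'a"
  assumes "nonassoc_algebra smul mult"
    and "alternative mult"
    and "\<forall>a b c. mult (mult a b) c = mult (mult b a) c"
  shows "\<forall>a b c d.
           mult (mult (mult a b) c) d = mult (mult (mult a c) b) d \<and>
           mult d (mult (mult a b) c) = mult (mult (mult a b) d) c \<and>
           mult d (mult c (mult a b)) = mult (mult (mult a c) d) b"
proof -
  interpret altC smul mult using assms by (unfold_locales) auto
  show ?thesis using g1 g2 g3 by simp
qed

end
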